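(* For every $n\ge5$, the Johnson graph $J(n,2)$ and the Kneser graph $K(n,2)$ have no quantum symmetry.
   Context: $J(n,2)$ has as vertices the $2$-element subsets of $\{1,\dots,n\}$, two vertices adjacent iff the subsets intersect in exactly one element. $K(n,2)$ has the same vertices, two vertices adjacent iff the subsets are disjoint. For a finite simple undirected graph $\Gamma=(V,E)$ with $V=\{1,\dots,N\}$, $C(G_{aut}^+(\Gamma))$ is the universal unital $C^*$-algebra generated by $u_{ij}$, $1\le i,j\le N$, with relations: (R1) $u_{ij}=u_{ij}^*=u_{ij}^2$; (R2) $\sum_{l} u_{il}=1=\sum_{l} u_{li}$ for all $i$; (R3) $u_{ij}u_{kl}=u_{kl}u_{ij}=0$ whenever exactly one of $(i,k)\in E$, $(j,l)\in E$ holds. $\Gamma$ has no quantum symmetry if $C(G_{aut}^+(\Gamma))$ is commutative. *)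

theory Defs
  imports "HOL-Analysis.Analysis"
begin

text \<open>The ring structure
  (with unit 1, 1 \<noteq> 0) comes from the type class ring_1; complex scalar multiplication,
  involution and norm are explicit parameters.\<close>

locale unital_cstar_algebra =
  fixes smult :: "complex \<Rightarrow> 'a::ring_1 \<Rightarrow> 'a"
    and invol :: "'a \<Rightarrow> 'a"
    and nrm :: "'a \<Rightarrow> real"
  assumes smult_add_right: "\<And>c x y. smult c (x + y) = smult c x + smult c y"
    and smult_add_left: "\<And>c d x. smult (c + d) x = smult c x + smult d x"
    and smult_smult: "\<And>c d x. smult c (smult d x) = smult (c * d) x"
    and smult_one: "\<And>x. smult 1 x = x"
    and smult_mult_left: "\<And>c x y. smult c x * y = smult c (x * y)"
    and smult_mult_right: "\<And>c x y. x * smult c y = smult c (x * y)"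
    and nrm_eq_zero: "\<And>x. nrm x = 0 \<longleftrightarrow> x = 0"
    and nrm_triangle: "\<And>x y. nrm (x + y) \<le> nrm x + nrm y"
    and nrm_smult: "\<And>c x. nrm (smult c x) = cmod c * nrm x"
    and nrm_mult: "\<And>x y. nrm (x * y) \<le> nrm x * nrm y"
    and complete: "\<And>X. (\<forall>e>0. \<exists>N. \<forall>m\<ge>N. \<forall>k\<ge>N. nrm (X m - X k) < e)
                      \<Longrightarrow> (\<exists>L. (\<lambda>k. nrm (X k - L)) \<longlonglongrightarrow> 0)"
    and invol_invol: "\<And>x. invol (invol x) = x"
    and invol_add: "\<And>x y. invol (x + y) = invol x + invol y"
    and invol_smult: "\<And>c x. invol (smult c x) = smult (cnj c) (invol x)"
    and invol_mult: "\<And>x y. invol (x * y) = invol y * invol x"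
    and cstar_identity: "\<And>x. nrm (invol x * x) = nrm x ^ 2"

definition qaut_relations ::
  "('a::ring_1 \<Rightarrow> 'a) \<Rightarrow> 'v set \<Rightarrow> ('v \<Rightarrow> 'v \<Rightarrow> bool) \<Rightarrow> ('v \<Rightarrow> 'v \<Rightarrow> 'a) \<Rightarrow> bool" where
  "qaut_relations invol V E u \<longleftrightarrow>
     (\<forall>i\<in>V. \<forall>j\<in>V. u i j = invol (u i j) \<and> u i j = u i j * u i j) \<and>
     (\<forall>i\<in>V. (\<Sum>l\<in>V. u i l) = 1 \<and> (\<Sum>l\<in>V. u l i) = 1) \<and>
     (\<forall>i\<in>V. \<forall>j\<in>V. \<forall>k\<in>V. \<forall>l\<in>V. E i k \<noteq> E j l \<longrightarrow>
        u i j * u k l = 0 \<and> u k l * u i j = 0)"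

text \<open>No quantum symmetry: C(G_aut^+) is commutative, i.e. (universal property) in every
  unital C*-algebra (carried by the type 'a) any family satisfying the relations
  consists of pairwise commuting elements.  The theorem is stated schematically in 'a,
  hence for all unital C*-algebras.\<close>

definition no_quantum_symmetry ::
  "'a::ring_1 itself \<Rightarrow> 'v set \<Rightarrow> ('v \<Rightarrow> 'v \<Rightarrow> bool) \<Rightarrow> bool" where
  "no_quantum_symmetry (_ :: 'a itself) V E \<longleftrightarrow>
     (\<forall>(smult :: complex \<Rightarrow> 'a \<Rightarrow> 'a) invol nrm (u :: 'v \<Rightarrow> 'v \<Rightarrow> 'a).
        unital_cstar_algebra smult invol nrm \<longrightarrow> qaut_relations invol V E u \<longrightarrow>
        (\<forall>i\<in>V. \<forall>j\<in>V. \<forall>k\<in>V. \<forall>l\<in>V. u i j * u k l = u k l * u i j))"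

definition two_subsets :: "nat \<Rightarrow> nat set set" where
  "two_subsets n = {S. S \<subseteq> {1..n} \<and> card S = 2}"

definition johnson_adj :: "nat set \<Rightarrow> nat set \<Rightarrow> bool" where
  "johnson_adj S T \<longleftrightarrow> card (S \<inter> T) = 1"

definition kneser_adj :: "nat set \<Rightarrow> nat set \<Rightarrow> bool" where
  "kneser_adj S T \<longleftrightarrow> S \<inter> T = {}"

end

theory Submission
  imports Defs
begin

lemma two_subsets_iff:
  "S \<in> two_subsets n \<longleftrightarrow> (\<exists>a b. a \<noteq> b \<and> a \<in> {1..n} \<and> b \<in> {1..n} \<and> S = {a,b})"
proof
  assume "S \<in> two_subsets n"
  then obtain a b where "a \<noteq> b" "S = {a,b}" "S \<subseteq> {1..n}" unfolding two_subsets_def by (auto simp: card_2_iff)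
  then show "\<exists>a b. a \<noteq> b \<and> a \<in> {1..n} \<and> b \<in> {1..n} \<and> S = {a,b}" by blast
next
  assume "\<exists>a b. a \<noteq> b \<and> a \<in> {1..n} \<and> b \<in> {1..n} \<and> S = {a,b}"
  then show "S \<in> two_subsets n" unfolding two_subsets_def by auto
qed

lemma bij_star:
  assumes "a \<in> {1..n}"
  shows "bij_betw (\<lambda>y. {a,y}) ({1..n} - {a}) {i\<in>two_subsets n. a \<in> i}"
proof (rule bij_betw_imageI)
  show "inj_on (\<lambda>y. {a, y}) ({1..n} - {a})"
    by (auto simp: inj_on_def doubleton_eq_iff)
  show "(\<lambda>y. {a, y}) ` ({1..n} - {a}) = {i \<in> two_subsets n. a \<in> i}"
  proof
    show "(\<lambda>y. {a, y}) ` ({1..n} - {a}) \<subseteq> {i \<in> two_subsets n. a \<in> i}"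
        using assms by (auto simp: two_subsets_def)
    show "{i \<in> two_subsets n. a \<in> i} \<subseteq> (\<lambda>y. {a, y}) ` ({1..n} - {a})"
    proof
      fix i assume "i \<in> {i \<in> two_subsets n. a \<in> i}"
      then obtain x y where xy: "x \<noteq> y" "x \<in> {1..n}" "y \<in> {1..n}" "i = {x,y}" "a \<in> i"
        by (auto simp: two_subsets_iff)
      show "i \<in> (\<lambda>y. {a, y}) ` ({1..n} - {a})"
      proof (cases "a = x")
        case True then show ?thesis using xy by (auto intro!: image_eqI[of _ _ y])
      next
        case False then have "a = y" using xy by auto
        then show ?thesis using xy by (auto intro!: image_eqI[of _ _ x] simp: insert_commute)
      qed
    qed
  qed
qed

lemma sum_star:
  assumes "a \<in> {1..n}"
  shows "(\<Sum>i\<in>two_subsets n. if a \<in> i then f i else 0) = (\<Sum>b\<in>{1..n} - {a}. f {a,b})"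
proof -
  have fin: "finite (two_subsets n)" unfolding two_subsets_def
    by (rule finite_subset[of _ "Pow {1..n}"]) auto
  have "(\<Sum>i\<in>two_subsets n. if a \<in> i then f i else 0) = (\<Sum>i\<in>{i\<in>two_subsets n. a \<in> i}. f i)"
    using fin by (simp add: sum.inter_filter)
  also have "\<dots> = (\<Sum>b\<in>{1..n} - {a}. f {a,b})"
    using sum.reindex_bij_betw[OF bij_star[OF assms], of f] by simp
  finally show ?thesis .
qed

lemma card_star_adj:
  assumes c: "c \<in> {1..n}" and j: "j' \<in> two_subsets n"
  shows "card {j\<in>two_subsets n. c \<in> j \<and> johnson_adj j j'} = (if c \<in> j' then n - 2 else 2)"
proof -
  have eq: "{j\<in>two_subsets n. c \<in> j \<and> johnson_adj j j'} = (\<lambda>y. {c,y}) ` {y\<in>{1..n}-{c}. johnson_adj {c,y} j'}"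
  proof -
    have "{j\<in>two_subsets n. c \<in> j \<and> johnson_adj j j'} = {j\<in>{j\<in>two_subsets n. c \<in> j}. johnson_adj j j'}" by auto
    also have "\<dots> = {j\<in>(\<lambda>y. {c,y}) ` ({1..n}-{c}). johnson_adj j j'}"
      using bij_star[OF c] unfolding bij_betw_def by simp
    also have "\<dots> = (\<lambda>y. {c,y}) ` {y\<in>{1..n}-{c}. johnson_adj {c,y} j'}" by auto
    finally show ?thesis .
  qed
  have inj: "inj_on (\<lambda>y. {c,y}) {y\<in>{1..n}-{c}. johnson_adj {c,y} j'}"
    by (auto simp: inj_on_def doubleton_eq_iff)
  obtain x z where xz: "x \<noteq> z" "x \<in> {1..n}" "z \<in> {1..n}" "j' = {x,z}" using j by (auto simp: two_subsets_iff)
  show ?thesis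
  proof (cases "c \<in> j'")
    case True
    then obtain w where w: "j' = {c,w}" "w \<noteq> c" "w \<in> {1..n}" using xz by (auto simp: insert_commute)
    have "{y\<in>{1..n}-{c}. johnson_adj {c,y} j'} = {1..n} - {c,w}"
    proof -
      { fix y assume "y \<noteq> c"
        then have "johnson_adj {c,y} j' \<longleftrightarrow> y \<noteq> w" using w
          by (cases "y = w") (auto simp: johnson_adj_def Int_insert_left Int_insert_right) }
      then show ?thesis by auto
    qed
    moreover have "card ({1..n} - {c,w}) = n - 2"
      using w c by (subst card_Diff_subset) auto
    ultimately show ?thesis using True eq card_image[OF inj] by simp
  next
    case False
    have "{y\<in>{1..n}-{c}. johnson_adj {c,y} j'} = {x,z}"
    proof -
      { fix y assume "y \<noteq> c"
        then have "johnson_adj {c,y} j' \<longleftrightarrow> y \<in> {x,z}" using xz False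
          by (auto simp: johnson_adj_def Int_insert_left Int_insert_right) }
      then show ?thesis using xz False by auto
    qed
    then show ?thesis using False eq card_image[OF inj] xz by simp
  qed
qed


lemma finV: "finite (two_subsets n)"
  unfolding two_subsets_def by (rule finite_subset[of _ "Pow {1..n}"]) auto

lemma johnson_sym: "johnson_adj x y = johnson_adj y x"
  by (simp add: johnson_adj_def Int_commute)

lemma kneser_sym: "kneser_adj x y = kneser_adj y x"
  by (simp add: kneser_adj_def Int_commute)

lemma if_sum_dist: "(if P then sum f A else 0) = sum (\<lambda>x. if P then f x else 0) A"
  by (cases P) simp_all

lemma sum_if_const: "finite A \<Longrightarrow> (\<Sum>x\<in>A. if Q x then (y::'a::ring_1) else 0) = of_nat (card {x\<in>A. Q x}) * y"
proof -
  assume "finite A"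
  moreover have "{x\<in>A. Q x} = A \<inter> Collect Q" by auto
  ultimately show ?thesis by (simp add: sum.If_cases)
qed

definition Ysum :: "nat \<Rightarrow> (nat set \<Rightarrow> nat set \<Rightarrow> 'a::ring_1) \<Rightarrow> nat \<Rightarrow> nat set \<Rightarrow> 'a" where
  "Ysum n u c i = (\<Sum>j\<in>two_subsets n. if c \<in> j then u i j else 0)"

definition Msum :: "nat \<Rightarrow> (nat set \<Rightarrow> nat set \<Rightarrow> 'a::ring_1) \<Rightarrow> nat \<Rightarrow> nat \<Rightarrow> 'a" where
  "Msum n u a c = (\<Sum>i\<in>two_subsets n. if a \<in> i then Ysum n u c i else 0)"

lemma AU:
  fixes u :: "nat set \<Rightarrow> nat set \<Rightarrow> 'a::ring_1"
  assumes rows: "\<forall>i\<in>two_subsets n. (\<Sum>l\<in>two_subsets n. u i l) = 1"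
    and cols: "\<forall>j\<in>two_subsets n. (\<Sum>l\<in>two_subsets n. u l j) = 1"
    and r3: "\<forall>i\<in>two_subsets n. \<forall>j\<in>two_subsets n. \<forall>k\<in>two_subsets n. \<forall>l\<in>two_subsets n.
               johnson_adj i k \<noteq> johnson_adj j l \<longrightarrow> u i j * u k l = 0"
    and i: "i \<in> two_subsets n" and j: "j \<in> two_subsets n"
  shows "(\<Sum>i'\<in>two_subsets n. if johnson_adj i i' then u i' j else 0)
       = (\<Sum>j'\<in>two_subsets n. if johnson_adj j j' then u i j' else 0)"
proof -
  let ?V = "two_subsets n"
  have L: "(\<Sum>i'\<in>?V. if johnson_adj i i' then u i' j else 0)
      = (\<Sum>i'\<in>?V. \<Sum>j'\<in>?V. if johnson_adj i i' \<and> johnson_adj j j' then u i j' * u i' j else 0)"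
  proof (rule sum.cong[OF refl])
    fix i' assume i': "i' \<in> ?V"
    show "(if johnson_adj i i' then u i' j else 0)
        = (\<Sum>j'\<in>?V. if johnson_adj i i' \<and> johnson_adj j j' then u i j' * u i' j else 0)"
    proof (cases "johnson_adj i i'")
      case True
      have "u i' j = (\<Sum>j'\<in>?V. u i j') * u i' j" using rows i by simp
      also have "\<dots> = (\<Sum>j'\<in>?V. u i j' * u i' j)" by (simp add: sum_distrib_right)
      also have "\<dots> = (\<Sum>j'\<in>?V. if johnson_adj j j' then u i j' * u i' j else 0)"
      proof (rule sum.cong[OF refl])
        fix j' assume j': "j' \<in> ?V"
        show "u i j' * u i' j = (if johnson_adj j j' then u i j' * u i' j else 0)"
          using r3 i j i' j' True johnson_sym[of j j'] by auto
      qed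
      finally show ?thesis using True by simp
    qed simp
  qed
  have R: "(\<Sum>j'\<in>?V. if johnson_adj j j' then u i j' else 0)
      = (\<Sum>j'\<in>?V. \<Sum>i'\<in>?V. if johnson_adj i i' \<and> johnson_adj j j' then u i j' * u i' j else 0)"
  proof (rule sum.cong[OF refl])
    fix j' assume j': "j' \<in> ?V"
    show "(if johnson_adj j j' then u i j' else 0)
        = (\<Sum>i'\<in>?V. if johnson_adj i i' \<and> johnson_adj j j' then u i j' * u i' j else 0)"
    proof (cases "johnson_adj j j'")
      case True
      have "u i j' = u i j' * (\<Sum>i'\<in>?V. u i' j)" using cols j by simp
      also have "\<dots> = (\<Sum>i'\<in>?V. u i j' * u i' j)" by (simp add: sum_distrib_left)
      also have "\<dots> = (\<Sum>i'\<in>?V. if johnson_adj i i' then u i j' * u i' j else 0)"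
      proof (rule sum.cong[OF refl])
        fix i' assume i': "i' \<in> ?V"
        show "u i j' * u i' j = (if johnson_adj i i' then u i j' * u i' j else 0)"
          using r3 i j i' j' True johnson_sym[of j j'] by auto
      qed
      finally show ?thesis using True by simp
    qed simp
  qed
  show ?thesis unfolding L R by (rule sum.swap)
qed

lemma C1:
  assumes ab: "a \<noteq> b" and i': "i' \<in> two_subsets n"
  shows "(if a \<in> i' then y else 0) + (if b \<in> i' then y else 0)
       = (if i' = {a,b} then 2 * (y::'a::ring_1) else 0) + (if johnson_adj {a,b} i' then y else 0)"
proof -
  obtain x z where xz: "x \<noteq> z" "i' = {x,z}" using i' by (auto simp: two_subsets_iff)
  show ?thesis
    using ab xz by (auto simp: johnson_adj_def doubleton_eq_iff Int_insert_left Int_insert_right mult_2)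
qed

lemma K1:
  fixes u :: "nat set \<Rightarrow> nat set \<Rightarrow> 'a::ring_1"
  assumes n4: "n \<ge> 4"
    and rows: "\<forall>i\<in>two_subsets n. (\<Sum>l\<in>two_subsets n. u i l) = 1"
    and cols: "\<forall>j\<in>two_subsets n. (\<Sum>l\<in>two_subsets n. u l j) = 1"
    and r3: "\<forall>i\<in>two_subsets n. \<forall>j\<in>two_subsets n. \<forall>k\<in>two_subsets n. \<forall>l\<in>two_subsets n.
               johnson_adj i k \<noteq> johnson_adj j l \<longrightarrow> u i j * u k l = 0"
    and ab: "a \<noteq> b" "a \<in> {1..n}" "b \<in> {1..n}" and c: "c \<in> {1..n}"
  shows "Msum n u a c + Msum n u b c = of_nat (n - 2) * Ysum n u c {a,b} + 2"
proof -
  let ?V = "two_subsets n"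
  let ?i = "{a,b}"
  let ?Y = "Ysum n u c"
  have iV: "?i \<in> ?V" using ab by (auto simp: two_subsets_iff)
  have fin: "finite ?V" by (rule finV)
  have s1: "Msum n u a c + Msum n u b c
      = (\<Sum>i'\<in>?V. (if i' = ?i then 2 * ?Y i' else 0) + (if johnson_adj ?i i' then ?Y i' else 0))"
    unfolding Msum_def sum.distrib[symmetric]
    by (rule sum.cong[OF refl]) (rule C1[OF ab(1)], simp)
  also have "\<dots> = 2 * ?Y ?i + (\<Sum>i'\<in>?V. if johnson_adj ?i i' then ?Y i' else 0)"
    using iV fin by (simp add: sum.distrib)
  finally have s2: "Msum n u a c + Msum n u b c = 2 * ?Y ?i + (\<Sum>i'\<in>?V. if johnson_adj ?i i' then ?Y i' else 0)" .
  have "(\<Sum>i'\<in>?V. if johnson_adj ?i i' then ?Y i' else 0)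
      = (\<Sum>i'\<in>?V. \<Sum>j\<in>?V. if johnson_adj ?i i' \<and> c \<in> j then u i' j else 0)"
    unfolding Ysum_def if_sum_dist by (simp add: if_if_eq_conj)
  also have "\<dots> = (\<Sum>j\<in>?V. \<Sum>i'\<in>?V. if johnson_adj ?i i' \<and> c \<in> j then u i' j else 0)"
    by (rule sum.swap)
  also have "\<dots> = (\<Sum>j\<in>?V. if c \<in> j then (\<Sum>i'\<in>?V. if johnson_adj ?i i' then u i' j else 0) else 0)"
    unfolding if_sum_dist by (rule sum.cong[OF refl], rule sum.cong[OF refl]) auto
  also have "\<dots> = (\<Sum>j\<in>?V. if c \<in> j then (\<Sum>j'\<in>?V. if johnson_adj j j' then u ?i j' else 0) else 0)"
    by (rule sum.cong[OF refl]) (simp add: AU[OF rows cols r3 iV])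
  also have "\<dots> = (\<Sum>j\<in>?V. \<Sum>j'\<in>?V. if c \<in> j \<and> johnson_adj j j' then u ?i j' else 0)"
    unfolding if_sum_dist by (rule sum.cong[OF refl], rule sum.cong[OF refl]) auto
  also have "\<dots> = (\<Sum>j'\<in>?V. \<Sum>j\<in>?V. if c \<in> j \<and> johnson_adj j j' then u ?i j' else 0)"
    by (rule sum.swap)
  also have "\<dots> = (\<Sum>j'\<in>?V. of_nat (card {j\<in>?V. c \<in> j \<and> johnson_adj j j'}) * u ?i j')"
    by (rule sum.cong[OF refl]) (rule sum_if_const[OF fin])
  also have "\<dots> = (\<Sum>j'\<in>?V. of_nat (n - 4) * (if c \<in> j' then u ?i j' else 0) + 2 * u ?i j')"
  proof (rule sum.cong[OF refl])
    fix j' assume j': "j' \<in> ?V"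
    show "of_nat (card {j\<in>?V. c \<in> j \<and> johnson_adj j j'}) * u ?i j'
        = of_nat (n - 4) * (if c \<in> j' then u ?i j' else 0) + 2 * u ?i j'"
    proof (cases "c \<in> j'")
      case True
      have "n - 2 = (n - 4) + 2" using n4 by simp
      then have "of_nat (n - 2) = (of_nat (n - 4) + 2 :: 'a)" by (metis of_nat_add of_nat_numeral)
      then show ?thesis using True card_star_adj[OF c j'] by (simp add: distrib_right)
    next
      case False
      then show ?thesis using card_star_adj[OF c j'] by simp
    qed
  qed
  also have "\<dots> = of_nat (n - 4) * ?Y ?i + 2"
    unfolding sum.distrib Ysum_def sum_distrib_left[symmetric] using rows iV by simp
  finally have s3: "(\<Sum>i'\<in>?V. if johnson_adj ?i i' then ?Y i' else 0) = of_nat (n - 4) * ?Y ?i + 2" .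
  have n2: "of_nat (n - 2) = (of_nat (n - 4) + 2 :: 'a)"
  proof -
    have "n - 2 = (n - 4) + 2" using n4 by simp
    then show ?thesis by (metis of_nat_add of_nat_numeral)
  qed
  show ?thesis unfolding s2 s3 n2 by (simp add: algebra_simps)
qed


lemma M_swap: "Msum n (\<lambda>i j. u j i) a c = Msum n u c a"
proof -
  let ?V = "two_subsets n"
  have "Msum n (\<lambda>i j. u j i) a c = (\<Sum>i\<in>?V. \<Sum>j\<in>?V. if a \<in> i \<and> c \<in> j then u j i else 0)"
    unfolding Msum_def Ysum_def if_sum_dist by (simp add: if_if_eq_conj)
  also have "\<dots> = (\<Sum>j\<in>?V. \<Sum>i\<in>?V. if a \<in> i \<and> c \<in> j then u j i else 0)" by (rule sum.swap)
  also have "\<dots> = Msum n u c a"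
    unfolding Msum_def Ysum_def if_sum_dist by (rule sum.cong[OF refl], rule sum.cong[OF refl]) auto
  finally show ?thesis .
qed

lemma YY:
  fixes u :: "nat set \<Rightarrow> nat set \<Rightarrow> 'a::ring_1"
  assumes idem: "\<forall>i\<in>two_subsets n. \<forall>j\<in>two_subsets n. u i j * u i j = u i j"
    and orow: "\<forall>i\<in>two_subsets n. \<forall>j\<in>two_subsets n. \<forall>j'\<in>two_subsets n. j \<noteq> j' \<longrightarrow> u i j * u i j' = 0"
    and i: "i \<in> two_subsets n"
  shows "Ysum n u c i * Ysum n u d i = (\<Sum>j\<in>two_subsets n. if c \<in> j \<and> d \<in> j then u i j else 0)"
proof -
  let ?V = "two_subsets n"
  have "Ysum n u c i * Ysum n u d i
      = (\<Sum>j\<in>?V. \<Sum>j'\<in>?V. (if c \<in> j then u i j else 0) * (if d \<in> j' then u i j' else 0))"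
    unfolding Ysum_def by (rule sum_product)
  also have "\<dots> = (\<Sum>j\<in>?V. \<Sum>j'\<in>?V. if j' = j then (if c \<in> j \<and> d \<in> j then u i j else 0) else 0)"
  proof (rule sum.cong[OF refl], rule sum.cong[OF refl])
    fix j j' assume j: "j \<in> ?V" and j': "j' \<in> ?V"
    show "(if c \<in> j then u i j else 0) * (if d \<in> j' then u i j' else 0)
        = (if j' = j then (if c \<in> j \<and> d \<in> j then u i j else 0) else 0)"
      using idem orow i j j' by auto
  qed
  also have "\<dots> = (\<Sum>j\<in>?V. if c \<in> j \<and> d \<in> j then u i j else 0)"
    by (rule sum.cong[OF refl]) (simp add: finV)
  finally show ?thesis .
qed

lemma Y_idem:
  fixes u :: "nat set \<Rightarrow> nat set \<Rightarrow> 'a::ring_1"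
  assumes idem: "\<forall>i\<in>two_subsets n. \<forall>j\<in>two_subsets n. u i j * u i j = u i j"
    and orow: "\<forall>i\<in>two_subsets n. \<forall>j\<in>two_subsets n. \<forall>j'\<in>two_subsets n. j \<noteq> j' \<longrightarrow> u i j * u i j' = 0"
    and i: "i \<in> two_subsets n"
  shows "Ysum n u c i * Ysum n u c i = Ysum n u c i"
  unfolding YY[OF idem orow i] by (simp add: Ysum_def)

lemma Y_prod:
  fixes u :: "nat set \<Rightarrow> nat set \<Rightarrow> 'a::ring_1"
  assumes idem: "\<forall>i\<in>two_subsets n. \<forall>j\<in>two_subsets n. u i j * u i j = u i j"
    and orow: "\<forall>i\<in>two_subsets n. \<forall>j\<in>two_subsets n. \<forall>j'\<in>two_subsets n. j \<noteq> j' \<longrightarrow> u i j * u i j' = 0"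
    and i: "i \<in> two_subsets n"
    and cd: "c \<noteq> d" "c \<in> {1..n}" "d \<in> {1..n}"
  shows "Ysum n u c i * Ysum n u d i = u i {c,d}"
proof -
  let ?V = "two_subsets n"
  have cdV: "{c,d} \<in> ?V" using cd by (auto simp: two_subsets_iff)
  have "(\<Sum>j\<in>?V. if c \<in> j \<and> d \<in> j then u i j else 0) = (\<Sum>j\<in>?V. if j = {c,d} then u i j else 0)"
  proof (rule sum.cong[OF refl])
    fix j assume j: "j \<in> ?V"
    then obtain x z where "x \<noteq> z" "j = {x,z}" by (auto simp: two_subsets_iff)
    then have "c \<in> j \<and> d \<in> j \<longleftrightarrow> j = {c,d}" using cd by (auto simp: doubleton_eq_iff)
    then show "(if c \<in> j \<and> d \<in> j then u i j else 0) = (if j = {c,d} then u i j else 0)" by simp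
  qed
  also have "\<dots> = u i {c,d}" using cdV by (simp add: finV)
  finally show ?thesis unfolding YY[OF idem orow i] .
qed

lemma ortho_gen:
  fixes u :: "'v \<Rightarrow> 'v \<Rightarrow> 'a::ring_1"
  assumes cols: "\<forall>j\<in>V. (\<Sum>k\<in>V. u k j) = 1"
    and r3: "\<forall>i\<in>V. \<forall>j\<in>V. \<forall>k\<in>V. \<forall>l\<in>V. E i k \<noteq> E j l \<longrightarrow> u i j * u k l = 0"
    and sym: "\<forall>x y. E x y = E y x"
    and iV: "i \<in> V" and vV: "v \<in> V" and wV: "w \<in> V" and xV: "x \<in> V"
    and vx: "E v x" and xw: "\<not> E x w"
  shows "u i v * u i w = 0"
proof -
  have "u i v * u i w = u i v * (\<Sum>k\<in>V. u k x) * u i w" using cols xV by simp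
  also have "\<dots> = (\<Sum>k\<in>V. u i v * u k x * u i w)" by (simp add: sum_distrib_left sum_distrib_right)
  also have "\<dots> = (\<Sum>k\<in>V. 0)"
  proof (rule sum.cong[OF refl])
    fix k assume kV: "k \<in> V"
    show "u i v * u k x * u i w = 0"
    proof (cases "E i k")
      case True
      then have "u k x * u i w = 0" using r3 kV xV iV wV sym xw by metis
      then show ?thesis by (simp add: mult.assoc)
    next
      case False
      then have "u i v * u k x = 0" using r3 kV xV iV vV vx by metis
      then show ?thesis by simp
    qed
  qed
  finally show ?thesis by simp
qed

lemma exists_outside:
  assumes n5: "n \<ge> 5" and v: "v \<in> two_subsets n" and w: "w \<in> two_subsets n"
  shows "\<exists>e\<in>{1..n}. e \<notin> v \<and> e \<notin> w"
proof (rule ccontr)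
  assume "\<not> ?thesis"
  then have sub: "{1..n} \<subseteq> v \<union> w" by auto
  have fv: "finite v" "card v = 2" "finite w" "card w = 2" using v w
    by (auto simp: two_subsets_def intro: card_ge_0_finite)
  have "n = card {1..n}" by simp
  also have "\<dots> \<le> card (v \<union> w)" using sub fv by (intro card_mono) auto
  also have "\<dots> \<le> card v + card w" by (rule card_Un_le)
  finally show False using fv n5 by simp
qed

lemma exists_diff:
  assumes v: "v \<in> two_subsets n" and w: "w \<in> two_subsets n" and vw: "v \<noteq> w"
  shows "\<exists>a\<in>v. a \<notin> w"
proof (rule ccontr)
  assume "\<not> ?thesis"
  then have "v \<subseteq> w" by auto
  moreover have "finite w" "card v = card w" using v w
    by (auto simp: two_subsets_def intro: card_ge_0_finite)
  ultimately have "v = w" by (simp add: card_subset_eq)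
  then show False using vw by simp
qed

lemma witness_J:
  assumes n5: "n \<ge> 5" and v: "v \<in> two_subsets n" and w: "w \<in> two_subsets n" and vw: "v \<noteq> w"
  shows "\<exists>x\<in>two_subsets n. johnson_adj v x \<and> \<not> johnson_adj x w"
proof -
  obtain a where a: "a \<in> v" "a \<notin> w" using exists_diff[OF v w vw] by blast
  obtain e where e: "e \<in> {1..n}" "e \<notin> v" "e \<notin> w" using exists_outside[OF n5 v w] by blast
  have aP: "a \<in> {1..n}" using a v by (auto simp: two_subsets_def)
  have ae: "a \<noteq> e" using a e by auto
  have "{a,e} \<in> two_subsets n" using aP e ae by (auto simp: two_subsets_iff)
  moreover have "v \<inter> {a,e} = {a}" using a e by auto
  moreover have "{a,e} \<inter> w = {}" using a e by auto
  ultimately show ?thesis unfolding johnson_adj_def by (intro bexI[of _ "{a,e}"]) auto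
qed

lemma witness_K:
  assumes n5: "n \<ge> 5" and v: "v \<in> two_subsets n" and w: "w \<in> two_subsets n" and vw: "v \<noteq> w"
  shows "\<exists>x\<in>two_subsets n. kneser_adj v x \<and> \<not> kneser_adj x w"
proof -
  obtain c where c: "c \<in> w" "c \<notin> v" using exists_diff[OF w v] vw by metis
  obtain e where e: "e \<in> {1..n}" "e \<notin> v" "e \<notin> w" using exists_outside[OF n5 v w] by blast
  have cP: "c \<in> {1..n}" using c w by (auto simp: two_subsets_def)
  have ce: "c \<noteq> e" using c e by auto
  have "{c,e} \<in> two_subsets n" using cP e ce by (auto simp: two_subsets_iff)
  moreover have "v \<inter> {c,e} = {}" using c e by auto
  moreover have "{c,e} \<inter> w \<noteq> {}" using c by auto
  ultimately show ?thesis unfolding kneser_adj_def by (intro bexI[of _ "{c,e}"]) auto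
qed

lemma JK:
  assumes i: "i \<in> two_subsets n" and k: "k \<in> two_subsets n" and ik: "i \<noteq> k"
  shows "johnson_adj i k \<longleftrightarrow> \<not> kneser_adj i k"
proof -
  have fin: "finite i" "card i = 2" "finite k" "card k = 2" using i k
    by (auto simp: two_subsets_def intro: card_ge_0_finite)
  have le: "card (i \<inter> k) \<le> 2" using fin by (metis card_mono inf_le1)
  have ne: "card (i \<inter> k) \<noteq> 2"
  proof
    assume "card (i \<inter> k) = 2"
    then have "i \<inter> k = i" using fin by (metis card_subset_eq inf_le1)
    then have "i \<subseteq> k" by auto
    then have "i = k" using fin by (simp add: card_subset_eq)
    then show False using ik by simp
  qed
  have "card (i \<inter> k) = 0 \<longleftrightarrow> i \<inter> k = {}" using fin by simp
  then show ?thesis unfolding johnson_adj_def kneser_adj_def using le ne by linarith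
qed

lemma J_not_refl: "i \<in> two_subsets n \<Longrightarrow> \<not> johnson_adj i i"
  by (simp add: johnson_adj_def two_subsets_def)


definition vv :: "(complex \<Rightarrow> 'a \<Rightarrow> 'a) \<Rightarrow> nat \<Rightarrow> (nat set \<Rightarrow> nat set \<Rightarrow> 'a::ring_1) \<Rightarrow> nat \<Rightarrow> nat \<Rightarrow> 'a" where
  "vv sm n u a c = sm (1 / of_nat (n - 2)) (Msum n u a c - 1)"

lemma comm_add: "(x::'a::ring_1) * y = y * x \<Longrightarrow> x * z = z * x \<Longrightarrow> x * (y + z) = (y + z) * x"
  by (simp add: algebra_simps)

lemma comm_mult: "(x::'a::ring_1) * y = y * x \<Longrightarrow> x * z = z * x \<Longrightarrow> x * (y * z) = (y * z) * x"
  by (metis mult.assoc)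

context unital_cstar_algebra
begin

lemma smult_zero_left: "smult 0 x = 0"
proof -
  have "smult 0 x + smult 0 x = smult 0 x + 0" using smult_add_left[of 0 0 x] by simp
  then show ?thesis by simp
qed

lemma smult_zero_right: "smult c 0 = 0"
proof -
  have "smult c 0 + smult c 0 = smult c 0 + 0" using smult_add_right[of c 0 0] by simp
  then show ?thesis by simp
qed

lemma smult_of_nat: "smult (of_nat m) x = of_nat m * x"
proof (induction m)
  case 0 then show ?case by (simp add: smult_zero_left)
next
  case (Suc m)
  have "smult (of_nat (Suc m)) x = smult (of_nat m + 1) x" by (simp only: of_nat_Suc add.commute)
  also have "\<dots> = smult (of_nat m) x + smult 1 x" by (rule smult_add_left)
  also have "\<dots> = of_nat m * x + x" using Suc smult_one by simp
  also have "\<dots> = of_nat (Suc m) * x" by (simp add: algebra_simps)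
  finally show ?case .
qed

lemma cancel_nat: fixes x :: 'a assumes "0 < m" and "of_nat m * x = 0" shows "x = 0"
proof -
  have m: "(of_nat m :: complex) \<noteq> 0" using assms(1) by simp
  have "x = smult ((1 / of_nat m) * of_nat m) x" using m by (simp add: smult_one)
  also have "\<dots> = smult (1 / of_nat m) (smult (of_nat m) x)" by (simp add: smult_smult)
  also have "\<dots> = 0" using assms(2) by (simp add: smult_of_nat smult_zero_right)
  finally show ?thesis .
qed

lemma nat_smult_inv: fixes y :: 'a assumes "0 < m" shows "of_nat m * smult (1 / of_nat m) y = y"
proof -
  have m: "(of_nat m :: complex) \<noteq> 0" using assms(1) by simp
  have "of_nat m * smult (1 / of_nat m) y = smult (of_nat m) (smult (1 / of_nat m) y)"
    by (simp add: smult_of_nat)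
  also have "\<dots> = smult 1 y" using m by (simp add: smult_smult)
  also have "\<dots> = y" by (rule smult_one)
  finally show ?thesis .
qed

lemma alg:
  fixes x :: "nat \<Rightarrow> 'a" and P :: "nat set"
  assumes finP: "finite P" and cardP: "card P = n" and n5: "n \<ge> 5"
    and pair: "\<forall>a\<in>P. \<forall>b\<in>P. a \<noteq> b \<longrightarrow> (x a + x b) * (x a + x b) = x a + x b"
    and sumx: "\<forall>a\<in>P. (\<Sum>b\<in>P - {a}. x b) = 1 - x a"
  shows "(\<forall>a\<in>P. x a * x a = x a) \<and> (\<forall>a\<in>P. \<forall>b\<in>P. a \<noteq> b \<longrightarrow> x a * x b = 0)"
proof -
  define e where "e a = x a * x a - x a" for a
  define E where "E = (\<Sum>a\<in>P. e a)"
  define k :: 'a where "k = of_nat (n - 4)"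
  have key: "k * e a + E = 0" if aP: "a \<in> P" for a
  proof -
    let ?S = "\<Sum>b\<in>P - {a}. x b"
    have c1: "card (P - {a}) = n - 1" using aP finP cardP by simp
    have "n - 1 = (n - 4) + 1 + 1 + 1" using n5 by simp
    then have n1: "(of_nat (n - 1) :: 'a) = k + 1 + 1 + 1" unfolding k_def by (metis of_nat_add of_nat_1)
    have s1: "(\<Sum>b\<in>P-{a}. (x a + x b) * (x a + x b)) = (\<Sum>b\<in>P-{a}. x a + x b)"
      using pair aP by (intro sum.cong) auto
    have s2: "(\<Sum>b\<in>P-{a}. (x a + x b) * (x a + x b))
        = (\<Sum>b\<in>P-{a}. x a * x a + x a * x b + x b * x a + (e b + x b))"
      by (intro sum.cong) (auto simp: e_def algebra_simps)
    have s3: "(\<Sum>b\<in>P-{a}. x a * x a + x a * x b + x b * x a + (e b + x b))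
        = of_nat (n - 1) * (x a * x a) + x a * ?S + ?S * x a + ((E - e a) + ?S)"
    proof -
      have eS: "(\<Sum>b\<in>P-{a}. e b) = E - e a" using finP aP by (simp add: E_def sum_diff1)
      have t1: "(\<Sum>b\<in>P-{a}. x a * x a) = of_nat (n - 1) * (x a * x a)" using c1 by simp
      have t2: "(\<Sum>b\<in>P-{a}. x a * x b) = x a * ?S" by (simp add: sum_distrib_left)
      have t3: "(\<Sum>b\<in>P-{a}. x b * x a) = ?S * x a" by (simp add: sum_distrib_right)
      have t4: "(\<Sum>b\<in>P-{a}. e b + x b) = (E - e a) + ?S" using eS by (simp add: sum.distrib)
      show ?thesis by (simp only: sum.distrib t1 t2 t3 eS)
    qed
    have s4: "(\<Sum>b\<in>P-{a}. x a + x b) = of_nat (n - 1) * x a + ?S"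
      using c1 by (simp add: sum.distrib)
    have eq: "of_nat (n - 1) * (x a * x a) + x a * ?S + ?S * x a + ((E - e a) + ?S) = of_nat (n - 1) * x a + ?S"
      using s1 s2 s3 s4 by simp
    then have eq2: "(k + 1 + 1 + 1) * (x a * x a) + x a * (1 - x a) + (1 - x a) * x a + ((E - e a) + (1 - x a))
        = (k + 1 + 1 + 1) * x a + (1 - x a)"
      using sumx aP n1 by simp
    have "k * e a + E = ((k + 1 + 1 + 1) * (x a * x a) + x a * (1 - x a) + (1 - x a) * x a + ((E - e a) + (1 - x a)))
        - ((k + 1 + 1 + 1) * x a + (1 - x a))"
      by (simp add: e_def algebra_simps)
    then show ?thesis using eq2 by simp
  qed
  have "(\<Sum>a\<in>P. k * e a + E) = 0" using key by simp
  moreover have "(\<Sum>a\<in>P. k * e a + E) = of_nat (n - 4 + n) * E"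
    using cardP by (simp add: sum.distrib sum_distrib_left[symmetric] E_def k_def algebra_simps)
  ultimately have "of_nat (n - 4 + n) * E = 0" by simp
  then have E0: "E = 0" using n5 cancel_nat[of "n - 4 + n" E] by simp
  have idem: "x a * x a = x a" if aP: "a \<in> P" for a
  proof -
    have "of_nat (n - 4) * e a = 0" using key[OF aP] E0 k_def by simp
    then have "e a = 0" using n5 cancel_nat[of "n - 4"] by simp
    then show ?thesis by (simp add: e_def)
  qed
  have orth: "x a * x b = 0" if aP: "a \<in> P" and bP: "b \<in> P" and ab: "a \<noteq> b" for a b
  proof -
    have "x a * x a + x a * x b + x b * x a + x b * x b = x a + x b"
      using pair aP bP ab by (simp add: algebra_simps)
    then have anti: "x a * x b + x b * x a = 0" using idem[OF aP] idem[OF bP] by simp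
    have "x a * (x a * x b + x b * x a) = 0" using anti by simp
    then have h1: "x a * x b + x a * x b * x a = 0"
      by (simp add: distrib_left mult.assoc[symmetric] idem[OF aP])
    have "(x a * x b + x b * x a) * x a = 0" using anti by simp
    then have h2: "x a * x b * x a + x b * x a = 0"
      by (simp add: distrib_right mult.assoc idem[OF aP])
    have "x a * x b = x b * x a"
    proof -
      have "x a * x b = - (x a * x b * x a)" using h1 by (simp add: eq_neg_iff_add_eq_0)
      also have "\<dots> = x b * x a" using h2 by (simp add: neg_eq_iff_add_eq_0)
      finally show ?thesis .
    qed
    then have "of_nat 2 * (x a * x b) = 0" using anti by (simp add: mult_2)
    then show ?thesis using cancel_nat[of 2] by simp
  qed
  show ?thesis using idem orth by blast
qed


end

context unital_cstar_algebra begin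
lemma Xsum:
  fixes u :: "nat set \<Rightarrow> nat set \<Rightarrow> 'a"
  assumes n5: "n \<ge> 5"
    and rows: "\<forall>i\<in>two_subsets n. (\<Sum>l\<in>two_subsets n. u i l) = 1"
    and cols: "\<forall>j\<in>two_subsets n. (\<Sum>l\<in>two_subsets n. u l j) = 1"
    and r3: "\<forall>i\<in>two_subsets n. \<forall>j\<in>two_subsets n. \<forall>k\<in>two_subsets n. \<forall>l\<in>two_subsets n.
               johnson_adj i k \<noteq> johnson_adj j l \<longrightarrow> u i j * u k l = 0"
    and ab: "a \<noteq> b" "a \<in> {1..n}" "b \<in> {1..n}" and c: "c \<in> {1..n}"
  shows "vv smult n u a c + vv smult n u b c = Ysum n u c {a,b}"
proof -
  have m: "0 < n - 2" using n5 by simp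
  have K: "Msum n u a c + Msum n u b c = of_nat (n - 2) * Ysum n u c {a,b} + 2"
    using K1[OF _ rows cols r3 ab c] n5 by simp
  have "of_nat (n - 2) * (vv smult n u a c + vv smult n u b c) = (Msum n u a c - 1) + (Msum n u b c - 1)"
    unfolding vv_def distrib_left nat_smult_inv[OF m] ..
  also have "\<dots> = (Msum n u a c + Msum n u b c) - 2" by (simp add: algebra_simps)
  also have "\<dots> = of_nat (n - 2) * Ysum n u c {a,b}" unfolding K by simp
  finally have "of_nat (n - 2) * (vv smult n u a c + vv smult n u b c - Ysum n u c {a,b}) = 0"
    by (simp add: right_diff_distrib)
  then have "vv smult n u a c + vv smult n u b c - Ysum n u c {a,b} = 0" by (rule cancel_nat[OF m])
  then show ?thesis by simp
qed

lemma Xrow: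
  fixes u :: "nat set \<Rightarrow> nat set \<Rightarrow> 'a"
  assumes n5: "n \<ge> 5"
    and rows: "\<forall>i\<in>two_subsets n. (\<Sum>l\<in>two_subsets n. u i l) = 1"
    and cols: "\<forall>j\<in>two_subsets n. (\<Sum>l\<in>two_subsets n. u l j) = 1"
    and r3: "\<forall>i\<in>two_subsets n. \<forall>j\<in>two_subsets n. \<forall>k\<in>two_subsets n. \<forall>l\<in>two_subsets n.
               johnson_adj i k \<noteq> johnson_adj j l \<longrightarrow> u i j * u k l = 0"
    and a: "a \<in> {1..n}" and c: "c \<in> {1..n}"
  shows "(\<Sum>b\<in>{1..n} - {a}. vv smult n u b c) = 1 - vv smult n u a c"
proof -
  let ?v = "vv smult n u"
  let ?S = "\<Sum>b\<in>{1..n} - {a}. ?v b c"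
  have m: "0 < n - 2" using n5 by simp
  have "Msum n u a c = (\<Sum>b\<in>{1..n}-{a}. Ysum n u c {a,b})" unfolding Msum_def by (rule sum_star[OF a])
  also have "\<dots> = (\<Sum>b\<in>{1..n}-{a}. ?v a c + ?v b c)"
    by (rule sum.cong[OF refl], rule Xsum[OF n5 rows cols r3 _ a _ c, symmetric]) auto
  also have "\<dots> = of_nat (n - 1) * ?v a c + ?S" using a by (simp add: sum.distrib)
  finally have M: "Msum n u a c = of_nat (n - 1) * ?v a c + ?S" .
  have V: "of_nat (n - 2) * ?v a c = Msum n u a c - 1" unfolding vv_def nat_smult_inv[OF m] ..
  have "n - 1 = (n - 2) + 1" using n5 by simp
  then have n1: "(of_nat (n - 1) :: 'a) = of_nat (n - 2) + 1" by (metis of_nat_add of_nat_1)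
  have "?S = Msum n u a c - of_nat (n - 1) * ?v a c" using M by (simp add: algebra_simps)
  also have "\<dots> = (of_nat (n - 2) * ?v a c + 1) - (of_nat (n - 2) + 1) * ?v a c" using V n1 by (simp add: algebra_simps)
  also have "\<dots> = 1 - ?v a c" by (simp add: algebra_simps)
  finally show ?thesis .
qed

lemma core:
  fixes u :: "nat set \<Rightarrow> nat set \<Rightarrow> 'a"
  assumes n5: "n \<ge> 5"
    and idem: "\<forall>i\<in>two_subsets n. \<forall>j\<in>two_subsets n. u i j * u i j = u i j"
    and rows: "\<forall>i\<in>two_subsets n. (\<Sum>l\<in>two_subsets n. u i l) = 1"
    and cols: "\<forall>j\<in>two_subsets n. (\<Sum>l\<in>two_subsets n. u l j) = 1"
    and orow: "\<forall>i\<in>two_subsets n. \<forall>j\<in>two_subsets n. \<forall>j'\<in>two_subsets n. j \<noteq> j' \<longrightarrow> u i j * u i j' = 0"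
    and r3: "\<forall>i\<in>two_subsets n. \<forall>j\<in>two_subsets n. \<forall>k\<in>two_subsets n. \<forall>l\<in>two_subsets n.
               johnson_adj i k \<noteq> johnson_adj j l \<longrightarrow> u i j * u k l = 0"
  shows "(\<forall>a\<in>{1..n}. \<forall>c\<in>{1..n}. vv smult n u a c * vv smult n u a c = vv smult n u a c)
       \<and> (\<forall>a\<in>{1..n}. \<forall>b\<in>{1..n}. \<forall>c\<in>{1..n}. a \<noteq> b \<longrightarrow> vv smult n u a c * vv smult n u b c = 0)
       \<and> (\<forall>a\<in>{1..n}. \<forall>b\<in>{1..n}. \<forall>c\<in>{1..n}. \<forall>d\<in>{1..n}. a \<noteq> b \<longrightarrow> c \<noteq> d \<longrightarrow>
            u {a,b} {c,d} = (vv smult n u a c + vv smult n u b c) * (vv smult n u a d + vv smult n u b d)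
          \<and> u {a,b} {c,d} = (vv smult n u a d + vv smult n u b d) * (vv smult n u a c + vv smult n u b c))"
proof -
  let ?v = "vv smult n u"
  have A: "(\<forall>a\<in>{1..n}. ?v a c * ?v a c = ?v a c) \<and> (\<forall>a\<in>{1..n}. \<forall>b\<in>{1..n}. a \<noteq> b \<longrightarrow> ?v a c * ?v b c = 0)"
    if c: "c \<in> {1..n}" for c
  proof (rule alg[of "{1..n}" n "\<lambda>a. ?v a c"])
    show "finite {1..n}" by simp
    show "card {1..n} = n" by simp
    show "n \<ge> 5" by (rule n5)
    show "\<forall>a\<in>{1..n}. \<forall>b\<in>{1..n}. a \<noteq> b \<longrightarrow> (?v a c + ?v b c) * (?v a c + ?v b c) = ?v a c + ?v b c"
    proof (intro ballI impI)
      fix a b assume a: "a \<in> {1..n}" and b: "b \<in> {1..n}" and ab: "a \<noteq> b"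
      have iV: "{a,b} \<in> two_subsets n" using a b ab by (auto simp: two_subsets_iff)
      show "(?v a c + ?v b c) * (?v a c + ?v b c) = ?v a c + ?v b c"
        unfolding Xsum[OF n5 rows cols r3 ab a b c] by (rule Y_idem[OF idem orow iV])
    qed
    show "\<forall>a\<in>{1..n}. (\<Sum>b\<in>{1..n} - {a}. ?v b c) = 1 - ?v a c"
      using Xrow[OF n5 rows cols r3 _ c] by blast
  qed
  have B: "u {a,b} {c,d} = (?v a c + ?v b c) * (?v a d + ?v b d)
          \<and> u {a,b} {c,d} = (?v a d + ?v b d) * (?v a c + ?v b c)"
    if a: "a \<in> {1..n}" and b: "b \<in> {1..n}" and c: "c \<in> {1..n}" and d: "d \<in> {1..n}"
      and ab: "a \<noteq> b" and cd: "c \<noteq> d" for a b c d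
  proof -
    have iV: "{a,b} \<in> two_subsets n" using a b ab by (auto simp: two_subsets_iff)
    have 1: "Ysum n u c {a,b} * Ysum n u d {a,b} = u {a,b} {c,d}" by (rule Y_prod[OF idem orow iV cd c d])
    have 2: "Ysum n u d {a,b} * Ysum n u c {a,b} = u {a,b} {c,d}"
      using Y_prod[OF idem orow iV _ d c] cd by (simp add: insert_commute)
    show ?thesis using 1 2 unfolding Xsum[OF n5 rows cols r3 ab a b c] Xsum[OF n5 rows cols r3 ab a b d] by simp
  qed
  show ?thesis using A B by blast
qed

lemma J_comm:
  fixes u :: "nat set \<Rightarrow> nat set \<Rightarrow> 'a"
  assumes n5: "n \<ge> 5"
    and idem: "\<forall>i\<in>two_subsets n. \<forall>j\<in>two_subsets n. u i j * u i j = u i j"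
    and rows: "\<forall>i\<in>two_subsets n. (\<Sum>l\<in>two_subsets n. u i l) = 1"
    and cols: "\<forall>j\<in>two_subsets n. (\<Sum>l\<in>two_subsets n. u l j) = 1"
    and orow: "\<forall>i\<in>two_subsets n. \<forall>j\<in>two_subsets n. \<forall>j'\<in>two_subsets n. j \<noteq> j' \<longrightarrow> u i j * u i j' = 0"
    and ocol: "\<forall>j\<in>two_subsets n. \<forall>i\<in>two_subsets n. \<forall>i'\<in>two_subsets n. i \<noteq> i' \<longrightarrow> u i j * u i' j = 0"
    and r3: "\<forall>i\<in>two_subsets n. \<forall>j\<in>two_subsets n. \<forall>k\<in>two_subsets n. \<forall>l\<in>two_subsets n.
               johnson_adj i k \<noteq> johnson_adj j l \<longrightarrow> u i j * u k l = 0"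
  shows "\<forall>i\<in>two_subsets n. \<forall>j\<in>two_subsets n. \<forall>k\<in>two_subsets n. \<forall>l\<in>two_subsets n. u i j * u k l = u k l * u i j"
proof -
  let ?P = "{1..n}"
  let ?v = "vv smult n u"
  define w where "w = (\<lambda>i j. u j i)"
  have idemT: "\<forall>i\<in>two_subsets n. \<forall>j\<in>two_subsets n. w i j * w i j = w i j" using idem by (simp add: w_def)
  have rowsT: "\<forall>i\<in>two_subsets n. (\<Sum>l\<in>two_subsets n. w i l) = 1" using cols by (simp add: w_def)
  have colsT: "\<forall>j\<in>two_subsets n. (\<Sum>l\<in>two_subsets n. w l j) = 1" using rows by (simp add: w_def)
  have orowT: "\<forall>i\<in>two_subsets n. \<forall>j\<in>two_subsets n. \<forall>j'\<in>two_subsets n. j \<noteq> j' \<longrightarrow> w i j * w i j' = 0"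
    using ocol by (simp add: w_def)
  have r3T: "\<forall>i\<in>two_subsets n. \<forall>j\<in>two_subsets n. \<forall>k\<in>two_subsets n. \<forall>l\<in>two_subsets n.
               johnson_adj i k \<noteq> johnson_adj j l \<longrightarrow> w i j * w k l = 0"
  proof (intro ballI impI)
    fix i j k l assume i: "i \<in> two_subsets n" and j: "j \<in> two_subsets n"
      and k: "k \<in> two_subsets n" and l: "l \<in> two_subsets n"
      and ne: "johnson_adj i k \<noteq> johnson_adj j l"
    have "johnson_adj j l \<noteq> johnson_adj i k" using ne by metis
    then have "u j i * u l k = 0" using r3 i j k l by blast
    then show "w i j * w k l = 0" by (simp add: w_def)
  qed
  have C: "(\<forall>a\<in>?P. \<forall>c\<in>?P. ?v a c * ?v a c = ?v a c)
       \<and> (\<forall>a\<in>?P. \<forall>b\<in>?P. \<forall>c\<in>?P. a \<noteq> b \<longrightarrow> ?v a c * ?v b c = 0)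
       \<and> (\<forall>a\<in>?P. \<forall>b\<in>?P. \<forall>c\<in>?P. \<forall>d\<in>?P. a \<noteq> b \<longrightarrow> c \<noteq> d \<longrightarrow>
            u {a,b} {c,d} = (?v a c + ?v b c) * (?v a d + ?v b d)
          \<and> u {a,b} {c,d} = (?v a d + ?v b d) * (?v a c + ?v b c))"
    by (rule core[OF n5 idem rows cols orow r3])
  have CT: "\<forall>a\<in>?P. \<forall>b\<in>?P. \<forall>c\<in>?P. a \<noteq> b \<longrightarrow> vv smult n w a c * vv smult n w b c = 0"
    using core[OF n5 idemT rowsT colsT orowT r3T] by (rule conjunct1[OF conjunct2])
  have vT: "vv smult n w a c = ?v c a" for a c
  proof -
    have "Msum n w a c = Msum n u c a" unfolding w_def by (rule M_swap)
    then show ?thesis unfolding vv_def by simp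
  qed
  note C1 = C[THEN conjunct1]
  note C2 = C[THEN conjunct2, THEN conjunct1]
  note C3 = C[THEN conjunct2, THEN conjunct2]
  have videm: "?v a c * ?v a c = ?v a c" if "a \<in> ?P" "c \<in> ?P" for a c using C1 that by blast
  have vcol: "?v a c * ?v b c = 0" if "a \<in> ?P" "b \<in> ?P" "c \<in> ?P" "a \<noteq> b" for a b c
    using C2 that by blast
  have vrow: "?v a c * ?v a d = 0" if "a \<in> ?P" "c \<in> ?P" "d \<in> ?P" "c \<noteq> d" for a c d
  proof -
    have "vv smult n w c a * vv smult n w d a = 0" using CT that by blast
    then show ?thesis unfolding vT .
  qed
  have U1: "u {a,b} {c,d} = (?v a c + ?v b c) * (?v a d + ?v b d)"
    and U2: "u {a,b} {c,d} = (?v a d + ?v b d) * (?v a c + ?v b c)"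
    if "a \<in> ?P" "b \<in> ?P" "c \<in> ?P" "d \<in> ?P" "a \<noteq> b" "c \<noteq> d" for a b c d
    using C3[rule_format, OF that] by auto
  have vcomm: "?v a c * ?v b d = ?v b d * ?v a c" if a: "a \<in> ?P" and b: "b \<in> ?P" and c: "c \<in> ?P" and d: "d \<in> ?P" for a b c d
  proof (cases "a = b")
    case True
    show ?thesis
    proof (cases "c = d")
      case False then show ?thesis using True vrow a c d by simp
    qed (simp add: True)
  next
    case ab: False
    show ?thesis
    proof (cases "c = d")
      case True then show ?thesis using ab vcol a b c by simp
    next
      case cd: False
      have eq: "(?v a c + ?v b c) * (?v a d + ?v b d) = (?v a d + ?v b d) * (?v a c + ?v b c)"
        using U1[OF a b c d ab cd] U2[OF a b c d ab cd] by simp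
      have L: "(?v a c + ?v b c) * (?v a d + ?v b d) = ?v a c * ?v b d + ?v b c * ?v a d"
        using vrow[OF a c d cd] vrow[OF b c d cd] by (simp add: algebra_simps)
      have R: "(?v a d + ?v b d) * (?v a c + ?v b c) = ?v a d * ?v b c + ?v b d * ?v a c"
        using vrow[OF a d c] vrow[OF b d c] cd by (simp add: algebra_simps)
      have eq2: "?v a c * ?v b d + ?v b c * ?v a d = ?v a d * ?v b c + ?v b d * ?v a c"
        using eq L R by simp
      have "?v a c * (?v a c * ?v b d + ?v b c * ?v a d) = ?v a c * (?v a d * ?v b c + ?v b d * ?v a c)"
        using eq2 by simp
      then have h1: "?v a c * ?v b d = ?v a c * ?v b d * ?v a c"
        using videm[OF a c] vcol[OF a b c ab] vrow[OF a c d cd]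
        by (simp add: distrib_left mult.assoc[symmetric])
      have "(?v a c * ?v b d + ?v b c * ?v a d) * ?v a c = (?v a d * ?v b c + ?v b d * ?v a c) * ?v a c"
        using eq2 by simp
      then have h2: "?v a c * ?v b d * ?v a c = ?v b d * ?v a c"
        using videm[OF a c] vcol[OF b a c] vrow[OF a d c] ab cd
        by (simp add: distrib_right mult.assoc)
      show ?thesis using h1 h2 by simp
    qed
  qed
  have ucomm_v: "u k l * ?v a c = ?v a c * u k l"
    if a: "a \<in> ?P" and c: "c \<in> ?P" and k: "k \<in> two_subsets n" and l: "l \<in> two_subsets n" for a c k l
  proof -
    obtain a' b' where ab': "a' \<noteq> b'" "a' \<in> ?P" "b' \<in> ?P" "k = {a',b'}" using k by (auto simp: two_subsets_iff)
    obtain c' d' where cd': "c' \<noteq> d'" "c' \<in> ?P" "d' \<in> ?P" "l = {c',d'}" using l by (auto simp: two_subsets_iff)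
    have U: "u k l = (?v a' c' + ?v b' c') * (?v a' d' + ?v b' d')" using U1[of a' b' c' d'] ab' cd' by simp
    have "?v a c * u k l = u k l * ?v a c" unfolding U
      by (intro comm_mult comm_add vcomm) (use a c ab' cd' in auto)
    then show ?thesis by simp
  qed
  show ?thesis
  proof (intro ballI)
    fix i j k l assume i: "i \<in> two_subsets n" and j: "j \<in> two_subsets n"
      and k: "k \<in> two_subsets n" and l: "l \<in> two_subsets n"
    obtain a b where ab: "a \<noteq> b" "a \<in> ?P" "b \<in> ?P" "i = {a,b}" using i by (auto simp: two_subsets_iff)
    obtain c d where cd: "c \<noteq> d" "c \<in> ?P" "d \<in> ?P" "j = {c,d}" using j by (auto simp: two_subsets_iff)
    have U: "u i j = (?v a c + ?v b c) * (?v a d + ?v b d)" using U1[of a b c d] ab cd by simp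
    have "u k l * u i j = u i j * u k l" unfolding U
      by (intro comm_mult comm_add ucomm_v) (use ab cd k l in auto)
    then show "u i j * u k l = u k l * u i j" by simp
  qed
qed

end

lemma r3_transpose:
  fixes u :: "'v \<Rightarrow> 'v \<Rightarrow> 'a::ring_1"
  assumes r3: "\<forall>i\<in>V. \<forall>j\<in>V. \<forall>k\<in>V. \<forall>l\<in>V. E i k \<noteq> E j l \<longrightarrow> u i j * u k l = 0"
  shows "\<forall>i\<in>V. \<forall>j\<in>V. \<forall>k\<in>V. \<forall>l\<in>V. E i k \<noteq> E j l \<longrightarrow> u j i * u l k = 0"
proof (intro ballI impI)
  fix i j k l assume i: "i \<in> V" and j: "j \<in> V" and k: "k \<in> V" and l: "l \<in> V"
    and ne: "E i k \<noteq> E j l"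
  have "E j l \<noteq> E i k" using ne by metis
  then show "u j i * u l k = 0" using r3 i j k l by blast
qed

lemma ortho_both:
  fixes u :: "'v \<Rightarrow> 'v \<Rightarrow> 'a::ring_1"
  assumes rows: "\<forall>i\<in>V. (\<Sum>l\<in>V. u i l) = 1"
    and cols: "\<forall>j\<in>V. (\<Sum>l\<in>V. u l j) = 1"
    and r3: "\<forall>i\<in>V. \<forall>j\<in>V. \<forall>k\<in>V. \<forall>l\<in>V. E i k \<noteq> E j l \<longrightarrow> u i j * u k l = 0"
    and sym: "\<forall>x y. E x y = E y x"
    and wit: "\<forall>v\<in>V. \<forall>w\<in>V. v \<noteq> w \<longrightarrow> (\<exists>x\<in>V. E v x \<and> \<not> E x w)"
  shows "\<forall>i\<in>V. \<forall>j\<in>V. \<forall>j'\<in>V. j \<noteq> j' \<longrightarrow> u i j * u i j' = 0"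
    and "\<forall>j\<in>V. \<forall>i\<in>V. \<forall>i'\<in>V. i \<noteq> i' \<longrightarrow> u i j * u i' j = 0"
proof -
  show "\<forall>i\<in>V. \<forall>j\<in>V. \<forall>j'\<in>V. j \<noteq> j' \<longrightarrow> u i j * u i j' = 0"
  proof (intro ballI impI)
    fix i j j' assume i: "i \<in> V" and j: "j \<in> V" and j': "j' \<in> V" and ne: "j \<noteq> j'"
    obtain x where x: "x \<in> V" "E j x" "\<not> E x j'" using wit j j' ne by blast
    show "u i j * u i j' = 0" by (rule ortho_gen[OF cols r3 sym i j j' x])
  qed
  have colsT: "\<forall>j\<in>V. (\<Sum>k\<in>V. (\<lambda>i j. u j i) k j) = 1" using rows by simp
  have r3T: "\<forall>i\<in>V. \<forall>j\<in>V. \<forall>k\<in>V. \<forall>l\<in>V. E i k \<noteq> E j l \<longrightarrow> (\<lambda>i j. u j i) i j * (\<lambda>i j. u j i) k l = 0"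
    using r3_transpose[OF r3] by simp
  show "\<forall>j\<in>V. \<forall>i\<in>V. \<forall>i'\<in>V. i \<noteq> i' \<longrightarrow> u i j * u i' j = 0"
  proof (intro ballI impI)
    fix j i i' assume j: "j \<in> V" and i: "i \<in> V" and i': "i' \<in> V" and ne: "i \<noteq> i'"
    obtain x where x: "x \<in> V" "E i x" "\<not> E x i'" using wit i i' ne by blast
    have "(\<lambda>i j. u j i) j i * (\<lambda>i j. u j i) j i' = 0" by (rule ortho_gen[OF colsT r3T sym j i i' x])
    then show "u i j * u i' j = 0" by simp
  qed
qed

theorem theorem1p3:
  fixes n :: nat
  assumes "n \<ge> 5"
  shows "no_quantum_symmetry TYPE('a::ring_1) (two_subsets n) johnson_adj
       \<and> no_quantum_symmetry TYPE('a::ring_1) (two_subsets n) kneser_adj"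
proof
  have n5: "n \<ge> 5" by (rule assms)
  show "no_quantum_symmetry TYPE('a) (two_subsets n) johnson_adj"
    unfolding no_quantum_symmetry_def
  proof (intro allI impI)
    fix smult :: "complex \<Rightarrow> 'a \<Rightarrow> 'a" and invol :: "'a \<Rightarrow> 'a" and nrm :: "'a \<Rightarrow> real"
      and u :: "nat set \<Rightarrow> nat set \<Rightarrow> 'a"
    assume A: "unital_cstar_algebra smult invol nrm"
      and Q: "qaut_relations invol (two_subsets n) johnson_adj u"
    have idem: "\<forall>i\<in>two_subsets n. \<forall>j\<in>two_subsets n. u i j * u i j = u i j"
      using Q unfolding qaut_relations_def by (metis (no_types, lifting))
    have rows: "\<forall>i\<in>two_subsets n. (\<Sum>l\<in>two_subsets n. u i l) = 1"
      using Q unfolding qaut_relations_def by blast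
    have cols: "\<forall>j\<in>two_subsets n. (\<Sum>l\<in>two_subsets n. u l j) = 1"
      using Q unfolding qaut_relations_def by blast
    have r3: "\<forall>i\<in>two_subsets n. \<forall>j\<in>two_subsets n. \<forall>k\<in>two_subsets n. \<forall>l\<in>two_subsets n.
               johnson_adj i k \<noteq> johnson_adj j l \<longrightarrow> u i j * u k l = 0"
      using Q unfolding qaut_relations_def by blast
    have sym: "\<forall>x y. johnson_adj x y = johnson_adj y x" using johnson_sym by blast
    have wit: "\<forall>v\<in>two_subsets n. \<forall>w\<in>two_subsets n. v \<noteq> w \<longrightarrow> (\<exists>x\<in>two_subsets n. johnson_adj v x \<and> \<not> johnson_adj x w)"
      using witness_J[OF n5] by blast
    note O = ortho_both[OF rows cols r3 sym wit]
    show "\<forall>i\<in>two_subsets n. \<forall>j\<in>two_subsets n. \<forall>k\<in>two_subsets n. \<forall>l\<in>two_subsets n.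
            u i j * u k l = u k l * u i j"
      by (rule unital_cstar_algebra.J_comm[OF A n5 idem rows cols O(1) O(2) r3])
  qed
  show "no_quantum_symmetry TYPE('a) (two_subsets n) kneser_adj"
    unfolding no_quantum_symmetry_def
  proof (intro allI impI)
    fix smult :: "complex \<Rightarrow> 'a \<Rightarrow> 'a" and invol :: "'a \<Rightarrow> 'a" and nrm :: "'a \<Rightarrow> real"
      and u :: "nat set \<Rightarrow> nat set \<Rightarrow> 'a"
    assume A: "unital_cstar_algebra smult invol nrm"
      and Q: "qaut_relations invol (two_subsets n) kneser_adj u"
    have idem: "\<forall>i\<in>two_subsets n. \<forall>j\<in>two_subsets n. u i j * u i j = u i j"
      using Q unfolding qaut_relations_def by (metis (no_types, lifting))
    have rows: "\<forall>i\<in>two_subsets n. (\<Sum>l\<in>two_subsets n. u i l) = 1"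
      using Q unfolding qaut_relations_def by blast
    have cols: "\<forall>j\<in>two_subsets n. (\<Sum>l\<in>two_subsets n. u l j) = 1"
      using Q unfolding qaut_relations_def by blast
    have r3K: "\<forall>i\<in>two_subsets n. \<forall>j\<in>two_subsets n. \<forall>k\<in>two_subsets n. \<forall>l\<in>two_subsets n.
               kneser_adj i k \<noteq> kneser_adj j l \<longrightarrow> u i j * u k l = 0"
      using Q unfolding qaut_relations_def by blast
    have sym: "\<forall>x y. kneser_adj x y = kneser_adj y x" using kneser_sym by blast
    have wit: "\<forall>v\<in>two_subsets n. \<forall>w\<in>two_subsets n. v \<noteq> w \<longrightarrow> (\<exists>x\<in>two_subsets n. kneser_adj v x \<and> \<not> kneser_adj x w)"
      using witness_K[OF n5] by blast
    note O = ortho_both[OF rows cols r3K sym wit]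
    have r3: "\<forall>i\<in>two_subsets n. \<forall>j\<in>two_subsets n. \<forall>k\<in>two_subsets n. \<forall>l\<in>two_subsets n.
               johnson_adj i k \<noteq> johnson_adj j l \<longrightarrow> u i j * u k l = 0"
    proof (intro ballI impI)
      fix i j k l assume i: "i \<in> two_subsets n" and j: "j \<in> two_subsets n"
        and k: "k \<in> two_subsets n" and l: "l \<in> two_subsets n"
        and ne: "johnson_adj i k \<noteq> johnson_adj j l"
      show "u i j * u k l = 0"
      proof (cases "i = k")
        case True
        then have "johnson_adj j l" using ne J_not_refl[OF i] by simp
        then have "j \<noteq> l" using J_not_refl[OF j] by auto
        then show ?thesis using O(1) True i j l by blast
      next
        case ik: False
        show ?thesis
        proof (cases "j = l")
          case True
          then have "johnson_adj i k" using ne J_not_refl[OF j] by simp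
          then have "i \<noteq> k" using J_not_refl[OF i] by auto
          then show ?thesis using O(2) True i j k by blast
        next
          case jl: False
          have "kneser_adj i k \<noteq> kneser_adj j l"
            using ne JK[OF i k ik] JK[OF j l jl] by simp
          then show ?thesis using r3K i j k l by blast
        qed
      qed
    qed
    show "\<forall>i\<in>two_subsets n. \<forall>j\<in>two_subsets n. \<forall>k\<in>two_subsets n. \<forall>l\<in>two_subsets n.
            u i j * u k l = u k l * u i j"
      by (rule unital_cstar_algebra.J_comm[OF A n5 idem rows cols O(1) O(2) r3])
  qed
qed

end
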